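(* Let $I=[a,b]$ with $|I|<1$, $\gamma>0$, and $\mathcal{K}\in\mathrm{D}^{1+\mathcal{Z}_\gamma}(I)$. For $x\in I$ let $z=\frac{b-x}{b-a}$. Then there is a constant $C>0$ such that for all $x\in I$ $$|z\mathcal{K}'(a)+(1-z)\mathcal{K}'(b)-\mathcal{K}'(x)|\le\begin{cases}C|I|\,T_\gamma(z,|I|), & z\in[0,\frac12],\\ C|I|\,T_\gamma(1-z,|I|), & z\in(\frac12,1].\end{cases}$$
   Context: $\mathcal{Z}_\gamma(x)=(\log\frac1x)^{-\gamma}$ for $x\in(0,1)$, $\mathcal{Z}_\gamma(0)=0$. $\mathrm{D}^{1+\mathcal{Z}_\gamma}(I)$ is the class of $C^1$ diffeomorphisms $\mathcal{K}$ of $I$ onto its image whose derivative satisfies: there is $C_0>0$ with $|\mathcal{K}'(\xi+\tau)+\mathcal{K}'(\xi-\tau)-2\mathcal{K}'(\xi)|\le C_0\tau\mathcal{Z}_\gamma(\tau)$ for all $\tau\in[0,|I|/2]$ and all $\xi$ with $\xi\pm\tau\in I$. $T_\gamma:[0,\frac12]\times(0,1)\to\mathbb{R}$ is defined by $T_\gamma(s,t)=s\int_s^1\frac{\mathcal{Z}_\gamma(xt)}{x}dx+\int_0^s\mathcal{Z}_\gamma(xt)dx$ for $s\in(0,\frac12]$ and $T_\gamma(0,t)=0$. *)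

theory Defs
  imports "HOL-Analysis.Analysis"
begin

text \<open>The modulus Z_gamma(x) = (log(1/x))^(-gamma) on (0,1), Z_gamma(0) = 0
  (values outside [0,1) are never used).\<close>
definition Zg :: "real \<Rightarrow> real \<Rightarrow> real" where
  "Zg \<gamma> x = (if 0 < x \<and> x < 1 then (ln (1 / x)) powr (- \<gamma>) else 0)"

definition C1_diffeo_on :: "real \<Rightarrow> real \<Rightarrow> (real \<Rightarrow> real) \<Rightarrow> (real \<Rightarrow> real) \<Rightarrow> bool" where
  "C1_diffeo_on a b K K' \<longleftrightarrow>
     (\<forall>x\<in>{a..b}. (K has_real_derivative K' x) (at x within {a..b})) \<and>
     continuous_on {a..b} K' \<and>
     (\<forall>x\<in>{a..b}. K' x \<noteq> 0) \<and>
     inj_on K {a..b}"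

definition D1Z :: "real \<Rightarrow> real \<Rightarrow> real \<Rightarrow> (real \<Rightarrow> real) \<Rightarrow> (real \<Rightarrow> real) \<Rightarrow> bool" where
  "D1Z \<gamma> a b K K' \<longleftrightarrow>
     C1_diffeo_on a b K K' \<and>
     (\<exists>C0>0. \<forall>\<tau> \<xi>. 0 \<le> \<tau> \<and> \<tau> \<le> (b - a) / 2 \<and> \<xi> - \<tau> \<in> {a..b} \<and> \<xi> + \<tau> \<in> {a..b} \<longrightarrow>
        \<bar>K' (\<xi> + \<tau>) + K' (\<xi> - \<tau>) - 2 * K' \<xi>\<bar> \<le> C0 * \<tau> * Zg \<gamma> \<tau>)"

definition Tg :: "real \<Rightarrow> real \<Rightarrow> real \<Rightarrow> real" where
  "Tg \<gamma> s t = (if s = 0 then 0 else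
      s * integral {s..1} (\<lambda>x. Zg \<gamma> (x * t) / x) + integral {0..s} (\<lambda>x. Zg \<gamma> (x * t)))"

end

theory Submission
  imports Defs
begin

lemma Zg_nonneg: "0 \<le> Zg g x" by (simp add: Zg_def)

lemma Zg_pos: "0 < x \<Longrightarrow> x < 1 \<Longrightarrow> 0 < Zg g x"
proof -
  assume "0 < x" "x < 1"
  hence "ln (1/x) > 0" by simp
  thus ?thesis using \<open>0<x\<close> \<open>x<1\<close> by (simp add: Zg_def)
qed

lemma Zg_mono: assumes "g > 0" "0 \<le> s" "s \<le> t" "t < 1" shows "Zg g s \<le> Zg g t"
proof (cases "s = 0")
  case True then show ?thesis by (simp add: Zg_def)
next
  case False
  hence s: "0 < s" using assms by simp
  have t: "0 < t" using s assms by simp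
  have "ln (1/t) > 0" using t assms by simp
  moreover have "ln (1/t) \<le> ln (1/s)" using s t assms by (simp add: ln_div)
  ultimately have "ln (1/s) powr (-g) \<le> ln (1/t) powr (-g)"
    using assms by (intro powr_mono2') auto
  thus ?thesis using s t assms by (simp add: Zg_def)
qed

lemma Zf_cont: assumes "0 < u" "0 < h" "h < 1"
  shows "continuous_on {u..1} (\<lambda>x. Zg g (x*h) / x)"
proof -
  have eq: "\<And>x. x \<in> {u..1} \<Longrightarrow> Zg g (x*h) / x = ln (1/(x*h)) powr (-g) / x"
  proof -
    fix x assume x: "x \<in> {u..1}"
    have "x*h \<le> 1*h" using x assms by (intro mult_right_mono) auto
    hence "0 < x*h" "x*h < 1" using x assms by (auto, linarith)
    thus "Zg g (x*h) / x = ln (1/(x*h)) powr (-g) / x" by (simp add: Zg_def)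
  qed
  have xh: "\<And>x. x\<in>{u..1} \<Longrightarrow> 0 < x*h \<and> x*h < 1"
  proof -
    fix x assume x: "x \<in> {u..1}"
    have "x*h \<le> 1*h" using x assms by (intro mult_right_mono) auto
    thus "0 < x*h \<and> x*h < 1" using x assms by (auto, linarith)
  qed
  have "continuous_on {u..1} (\<lambda>x. ln (1/(x*h)) powr (-g) / x)"
    apply (intro continuous_intros)
    using xh assms by (auto, fastforce+)
  thus ?thesis using eq by (metis (no_types, lifting) continuous_on_cong)
qed

definition Fh :: "real \<Rightarrow> real \<Rightarrow> real \<Rightarrow> real" where
  "Fh g h u = integral {u..1} (\<lambda>x. Zg g (x*h) / x)"

lemma Zf_nonneg: "0 \<le> Zg g (x*h) / x" if "0 < h" for x h g
proof (cases "x > 0")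
  case True then show ?thesis by (simp add: Zg_nonneg)
next
  case False
  hence "\<not> (0 < x*h)" using that by (simp add: mult_pos_pos zero_less_mult_iff)
  then show ?thesis by (simp add: Zg_def)
qed

lemma int_nonneg: assumes "0 < h" shows "0 \<le> integral {p..q} (\<lambda>x. Zg g (x*h) / x)"
proof (cases "(\<lambda>x. Zg g (x*h) / x) integrable_on {p..q}")
  case True then show ?thesis by (rule integral_nonneg) (use Zf_nonneg assms in auto)
next
  case False then show ?thesis by (simp add: not_integrable_integral)
qed

lemma Fh_split: assumes "0 < u" "u \<le> v" "v \<le> 1" "0 < h" "h < 1"
  shows "Fh g h u = integral {u..v} (\<lambda>x. Zg g (x*h) / x) + Fh g h v"
  unfolding Fh_def
  using Henstock_Kurzweil_Integration.integral_combine[OF assms(2,3) integrable_continuous_interval[OF Zf_cont[OF assms(1,4,5)]]]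
  by simp

lemma Fh_step: assumes "g > 0" "0 < u" "u \<le> 1/2" "0 < h" "h < 1"
  shows "Fh g h (2*u) + Zg g (u*h) / 2 \<le> Fh g h u"
proof -
  have sp: "Fh g h u = integral {u..2*u} (\<lambda>x. Zg g (x*h) / x) + Fh g h (2*u)"
    using assms by (intro Fh_split) auto
  have ci: "(\<lambda>x. Zg g (x*h) / x) integrable_on {u..2*u}"
    using integrable_continuous_interval[OF Zf_cont[OF assms(2,4,5)]]
    by (rule integrable_subinterval_real) (use assms in auto)
  have "integral {u..2*u} (\<lambda>x. Zg g (u*h) / (2*u)) \<le> integral {u..2*u} (\<lambda>x. Zg g (x*h) / x)"
  proof (rule integral_le[OF _ ci])
    show "(\<lambda>x. Zg g (u*h) / (2*u)) integrable_on {u..2*u}" by (rule integrable_const_ivl)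
  next
    fix x assume x: "x \<in> {u..2*u}"
    have "x*h \<le> 1*h" using x assms by (intro mult_right_mono) auto
    hence "x*h < 1" using assms by linarith
    moreover have "u*h \<le> x*h" using x assms by (intro mult_right_mono) auto
    ultimately have "Zg g (u*h) \<le> Zg g (x*h)" using assms by (intro Zg_mono) auto
    thus "Zg g (u*h) / (2*u) \<le> Zg g (x*h) / x"
      using x assms by (intro frac_le) (auto simp: Zg_nonneg)
  qed
  moreover have "integral {u..2*u} (\<lambda>x. Zg g (u*h) / (2*u)) = Zg g (u*h) / 2"
    using assms by (simp add: integral_const_real)
  ultimately show ?thesis using sp by linarith
qed

lemma key:
  fixes G :: "real \<Rightarrow> real"
  assumes "g > 0" "0 < h" "h < 1" "continuous_on {0..1} G" "D > 0"
    and step: "\<And>u. 0 < u \<Longrightarrow> u \<le> 1/2 \<Longrightarrow> \<bar>G (2*u) - 2 * G u\<bar> \<le> D * u * Zg g (u*h)"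
  shows "\<exists>K>0. \<forall>u. 0 < u \<and> u \<le> 1/2 \<longrightarrow> \<bar>G u\<bar> \<le> K * u * Fh g h u"
proof -
  have "bounded (G ` {0..1})"
    by (rule compact_imp_bounded[OF compact_continuous_image[OF assms(4) compact_Icc]])
  then obtain M where M0: "\<forall>x\<in>G ` {0..1}. norm x \<le> M"
    unfolding bounded_iff by blast
  have M: "\<And>u. u \<in> {0..1} \<Longrightarrow> \<bar>G u\<bar> \<le> M" using M0 by auto
  define A where "A = 2 * \<bar>M\<bar>"
  have A0: "A \<ge> 0" by (simp add: A_def)
  have Fnn: "\<And>u. 0 \<le> Fh g h u" unfolding Fh_def using int_nonneg assms(2) by blast
  have base: "\<bar>G u\<bar> \<le> A*u + D*u*Fh g h u" if "1/2 < u" "u \<le> 1" for u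
  proof -
    have "\<bar>G u\<bar> \<le> \<bar>M\<bar>" using M[of u] that by auto
    also have "\<bar>M\<bar>*1 \<le> \<bar>M\<bar>*(2*u)" using that by (intro mult_left_mono) auto
    hence "\<bar>M\<bar> \<le> A*u" unfolding A_def by simp
    also have "A*u \<le> A*u + D*u*Fh g h u"
      using that assms(5) Fnn[of u] by simp
    finally show ?thesis .
  qed
  have claim: "\<forall>u. (1/2)^Suc n < u \<and> u \<le> 1 \<longrightarrow> \<bar>G u\<bar> \<le> A*u + D*u*Fh g h u" for n
  proof (induction n)
    case 0 then show ?case using base by auto
  next
    case (Suc n)
    show ?case
    proof (intro allI impI)
      fix u assume u: "(1/2::real)^Suc (Suc n) < u \<and> u \<le> 1"
      show "\<bar>G u\<bar> \<le> A*u + D*u*Fh g h u"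
      proof (cases "u > 1/2")
        case True then show ?thesis using base u by auto
      next
        case False
        have "0 < (1/2::real)^Suc (Suc n)" by simp
        hence u0: "0 < u" using u by linarith
        have "(1/2::real)^Suc n < 2*u" using u by simp
        hence IH: "\<bar>G (2*u)\<bar> \<le> A*(2*u) + D*(2*u)*Fh g h (2*u)" using Suc.IH False by auto
        have st: "\<bar>G (2*u) - 2 * G u\<bar> \<le> D * u * Zg g (u*h)" using step u0 False by auto
        have Fs: "Fh g h (2*u) + Zg g (u*h) / 2 \<le> Fh g h u" using Fh_step assms u0 False by auto
        have "D*u*(Fh g h (2*u) + Zg g (u*h) / 2) \<le> D*u*Fh g h u"
          using Fs assms(5) u0 by (intro mult_left_mono) auto
        then have "2*\<bar>G u\<bar> \<le> 2*(A*u + D*u*Fh g h u)"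
          using IH st by (simp add: algebra_simps)
        then show ?thesis by simp
      qed
    qed
  qed
  have c: "Fh g h (1/2) \<ge> Zg g (h/2) / 2"
    using Fh_step[of g "1/2" h] assms by (simp add: Fh_def)
  have cpos: "Zg g (h/2) > 0" using assms by (intro Zg_pos) auto
  define c where "c = Fh g h (1/2)"
  have c0: "c > 0" using c cpos unfolding c_def by linarith
  have Fc: "c \<le> Fh g h u" if "0 < u" "u \<le> 1/2" for u
    using Fh_split[of u "1/2" h g] that assms int_nonneg[where h=h and g=g and p=u and q="1/2"] unfolding c_def by auto
  show ?thesis
  proof (intro exI[of _ "A/c + D"] conjI allI impI)
    show "A/c + D > 0" using A0 c0 assms(5) by (simp add: add_nonneg_pos)
  next
    fix u :: real assume u: "0 < u \<and> u \<le> 1/2"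
    obtain n where n: "(1/2::real)^n < u" using real_arch_pow_inv[of u "1/2"] u by auto
    have "(1/2::real)^Suc n = (1/2)^n / 2" by simp
    moreover have "(1/2::real)^n > 0" by simp
    ultimately have "(1/2::real)^Suc n < u" using n by linarith
    hence G: "\<bar>G u\<bar> \<le> A*u + D*u*Fh g h u" using claim u by auto
    have "A*u = (A/c)*u*c" using c0 by simp
    also have "\<dots> \<le> (A/c)*u*Fh g h u" using Fc u A0 c0 by (intro mult_left_mono) auto
    finally show "\<bar>G u\<bar> \<le> (A/c + D) * u * Fh g h u" using G by (simp add: algebra_simps)
  qed
qed


lemma Tg_ge: assumes "0 < z" "0 < h" shows "z * Fh g h z \<le> Tg g z h"
proof -
  have "0 \<le> integral {0..z} (\<lambda>x. Zg g (x * h))"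
  proof (cases "(\<lambda>x. Zg g (x * h)) integrable_on {0..z}")
    case True then show ?thesis by (rule integral_nonneg) (simp add: Zg_nonneg)
  next
    case False then show ?thesis by (simp add: not_integrable_integral)
  qed
  thus ?thesis using assms by (simp add: Tg_def Fh_def)
qed

theorem lemma2p7:
  fixes a b \<gamma> :: real and K K' :: "real \<Rightarrow> real"
  assumes "a < b" and "b - a < 1" and "\<gamma> > 0"
    and "D1Z \<gamma> a b K K'"
  shows "\<exists>C>0. \<forall>x\<in>{a..b}.
    (let z = (b - x) / (b - a) in
      \<bar>z * K' a + (1 - z) * K' b - K' x\<bar>
        \<le> (if z \<le> 1/2 then C * (b - a) * Tg \<gamma> z (b - a)
            else C * (b - a) * Tg \<gamma> (1 - z) (b - a)))"
proof -
  define h where "h = b - a"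
  have h0: "0 < h" "h < 1" using assms unfolding h_def by auto
  have contK: "continuous_on {a..b} K'" using assms(4) by (simp add: D1Z_def C1_diffeo_on_def)
  obtain C0 where C0: "C0 > 0" and Z: "\<And>\<tau> \<xi>. 0 \<le> \<tau> \<Longrightarrow> \<tau> \<le> (b - a) / 2 \<Longrightarrow> \<xi> - \<tau> \<in> {a..b} \<Longrightarrow> \<xi> + \<tau> \<in> {a..b} \<Longrightarrow>
        \<bar>K' (\<xi> + \<tau>) + K' (\<xi> - \<tau>) - 2 * K' \<xi>\<bar> \<le> C0 * \<tau> * Zg \<gamma> \<tau>"
    using assms(4) unfolding D1Z_def by blast
  define s where "s = (K' b - K' a) / h"
  have hs: "h * s = K' b - K' a" using h0 by (simp add: s_def)
  define gf where "gf x = K' x - (K' a + (x - a) * s)" for x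
  have gfb: "gf b = 0" using hs unfolding gf_def h_def by (simp add: algebra_simps)
  have gfa: "gf a = 0" unfolding gf_def by simp
  define G where "G u = gf (b - u * h)" for u
  define H where "H u = gf (a + u * h)" for u
  have contgf: "continuous_on {a..b} gf" unfolding gf_def by (intro continuous_intros contK)
  have mapG: "(\<lambda>u. b - u * h) ` {0..1} \<subseteq> {a..b}"
  proof
    fix y assume "y \<in> (\<lambda>u. b - u * h) ` {0..1}"
    then obtain u where u: "u \<in> {0..1}" "y = b - u*h" by auto
    have "u*h \<le> 1*h" using u h0 by (intro mult_right_mono) auto
    moreover have "0 \<le> u*h" using u h0 by auto
    ultimately show "y \<in> {a..b}" using u unfolding h_def by auto
  qed
  have mapH: "(\<lambda>u. a + u * h) ` {0..1} \<subseteq> {a..b}"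
  proof
    fix y assume "y \<in> (\<lambda>u. a + u * h) ` {0..1}"
    then obtain u where u: "u \<in> {0..1}" "y = a + u*h" by auto
    have "u*h \<le> 1*h" using u h0 by (intro mult_right_mono) auto
    moreover have "0 \<le> u*h" using u h0 by auto
    ultimately show "y \<in> {a..b}" using u unfolding h_def by auto
  qed
  have contG: "continuous_on {0..1} G" unfolding G_def
    by (rule continuous_on_compose2[OF contgf _ mapG]) (intro continuous_intros)
  have contH: "continuous_on {0..1} H" unfolding H_def
    by (rule continuous_on_compose2[OF contgf _ mapH]) (intro continuous_intros)
  have D0: "C0 * h > 0" using C0 h0 by simp
  have uh: "0 \<le> u*h" "u*h \<le> (b-a)/2" "2*u*h \<le> b - a" if "0 < u" "u \<le> 1/2" for u
  proof -
    show "0 \<le> u*h" using that h0 by auto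
    have "u*h \<le> (1/2)*h" using that h0 by (intro mult_right_mono) auto
    thus "u*h \<le> (b-a)/2" "2*u*h \<le> b - a" unfolding h_def by auto
  qed
  have stepG: "\<bar>G (2*u) - 2 * G u\<bar> \<le> (C0*h) * u * Zg \<gamma> (u*h)" if "0 < u" "u \<le> 1/2" for u
  proof -
    have "\<bar>K' ((b - u*h) + u*h) + K' ((b - u*h) - u*h) - 2 * K' (b - u*h)\<bar> \<le> C0 * (u*h) * Zg \<gamma> (u*h)"
      using uh[OF that] h0 by (intro Z) (auto simp: algebra_simps)
    moreover have "G (2*u) - 2 * G u = K' ((b - u*h) + u*h) + K' ((b - u*h) - u*h) - 2 * K' (b - u*h)"
      using gfb unfolding G_def gf_def by (simp add: algebra_simps)
    ultimately show ?thesis by (simp add: algebra_simps)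
  qed
  have stepH: "\<bar>H (2*u) - 2 * H u\<bar> \<le> (C0*h) * u * Zg \<gamma> (u*h)" if "0 < u" "u \<le> 1/2" for u
  proof -
    have "\<bar>K' ((a + u*h) + u*h) + K' ((a + u*h) - u*h) - 2 * K' (a + u*h)\<bar> \<le> C0 * (u*h) * Zg \<gamma> (u*h)"
      using uh[OF that] h0 by (intro Z) (auto simp: algebra_simps)
    moreover have "H (2*u) - 2 * H u = K' ((a + u*h) + u*h) + K' ((a + u*h) - u*h) - 2 * K' (a + u*h)"
      using gfa unfolding H_def gf_def by (simp add: algebra_simps)
    ultimately show ?thesis by (simp add: algebra_simps)
  qed
  obtain K1 where K1: "K1 > 0" "\<forall>u. 0 < u \<and> u \<le> 1/2 \<longrightarrow> \<bar>G u\<bar> \<le> K1 * u * Fh \<gamma> h u"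
    using key[OF assms(3) h0 contG D0 stepG] by blast
  obtain K2 where K2: "K2 > 0" "\<forall>u. 0 < u \<and> u \<le> 1/2 \<longrightarrow> \<bar>H u\<bar> \<le> K2 * u * Fh \<gamma> h u"
    using key[OF assms(3) h0 contH D0 stepH] by blast
  have Fnn: "\<And>u. 0 \<le> Fh \<gamma> h u" unfolding Fh_def using int_nonneg h0 by blast
  have TT: "\<bar>G u\<bar> \<le> (K1 + K2) * Tg \<gamma> u h \<and> \<bar>H u\<bar> \<le> (K1 + K2) * Tg \<gamma> u h" if "0 < u" "u \<le> 1/2" for u
  proof -
    have T: "u * Fh \<gamma> h u \<le> Tg \<gamma> u h" using Tg_ge that h0 by auto
    have uF: "0 \<le> u * Fh \<gamma> h u" using Fnn that by simp
    have "K1 * (u * Fh \<gamma> h u) \<le> (K1 + K2) * Tg \<gamma> u h"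
      using T uF K1 K2 by (intro mult_mono) auto
    moreover have "K2 * (u * Fh \<gamma> h u) \<le> (K1 + K2) * Tg \<gamma> u h"
      using T uF K1 K2 by (intro mult_mono) auto
    ultimately show ?thesis using K1(2) K2(2) that by (auto simp: mult.assoc)
  qed
  show ?thesis
  proof (intro exI[of _ "(K1 + K2) / h"] conjI ballI)
    show "(K1 + K2) / h > 0" using K1 K2 h0 by simp
  next
    fix x assume x: "x \<in> {a..b}"
    define z where "z = (b - x) / h"
    have xz: "x = b - z * h" using h0 unfolding z_def by simp
    have xw: "x = a + (1 - z) * h" using h0 unfolding z_def h_def by (simp add: field_simps)
    have lhs: "z * K' a + (1 - z) * K' b - K' x = - gf x"
    proof -
      have "z * (K' b - K' a) = z * (h * s)" using hs by simp
      also have "\<dots> = (z * h) * s" by simp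
      also have "z * h = b - x" using xz by simp
      finally have e: "z * (K' b - K' a) = (b - x) * s" .
      have "K' b - K' a = (b - a) * s" using hs h_def by simp
      thus ?thesis unfolding gf_def using e by (simp add: algebra_simps)
    qed
    have CT: "(K1 + K2) / h * h = K1 + K2" using h0 by simp
    have z01: "0 \<le> z" "z \<le> 1" using x h0 unfolding z_def h_def by auto
    have "\<bar>z * K' a + (1 - z) * K' b - K' x\<bar>
        \<le> (if z \<le> 1/2 then (K1 + K2) / h * h * Tg \<gamma> z h
            else (K1 + K2) / h * h * Tg \<gamma> (1 - z) h)"
    proof (cases "z \<le> 1/2")
      case True
      show ?thesis
      proof (cases "z = 0")
        case True then show ?thesis using xz lhs gfb by (simp add: Tg_def)
      next
        case False
        hence "\<bar>G z\<bar> \<le> (K1 + K2) * Tg \<gamma> z h" using TT z01 \<open>z \<le> 1/2\<close> by auto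
        then show ?thesis using True lhs xz CT unfolding G_def by simp
      qed
    next
      case False
      show ?thesis
      proof (cases "z = 1")
        case True then show ?thesis using xw lhs gfa by (simp add: Tg_def)
      next
        case nz: False
        hence "\<bar>H (1-z)\<bar> \<le> (K1 + K2) * Tg \<gamma> (1-z) h" using TT z01 False by auto
        then show ?thesis using False lhs xw CT unfolding H_def by simp
      qed
    qed
    then show "let z = (b - x) / (b - a) in
      \<bar>z * K' a + (1 - z) * K' b - K' x\<bar>
        \<le> (if z \<le> 1/2 then (K1 + K2) / h * (b - a) * Tg \<gamma> z (b - a)
            else (K1 + K2) / h * (b - a) * Tg \<gamma> (1 - z) (b - a))"
      unfolding z_def h_def Let_def by simp
  qed
qed

end
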